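(* Let $(X,d)$ be a pointed metric space and let $((x_i,y_i))_{i\in I}$ be a Lipschitz interpolating family in $\widetilde X$ for $\mathrm{Lip}_0(X)$ with Lipschitz interpolation constant $M$, and let $T$ be its Lipschitz interpolating operator. Assume that there exists a bounded linear operator $R:\ell_\infty(I)\to\mathrm{Lip}_0(X)$ with $\|R\|\leq M$ and $T\circ R=\mathrm{Id}_{\ell_\infty(I)}$. Then there exists a Beurling set $(f_i)_{i\in I}$ of functions in $\mathrm{Lip}_0(X)$ for $((x_i,y_i))_{i\in I}$.
   Context: All spaces are real. $(X,d)$ is a metric space with base point $0$, $\widetilde{X}=\{(x,y)\in X\times X: x\neq y\}$. $\mathrm{Lip}_0(X)$ is the Banach space of Lipschitz $f:X\to\mathbb{R}$ with $f(0)=0$, normed by $\|f\|=\sup_{(x,y)\in\widetilde X}|f(x)-f(y)|/d(x,y)$. For a family $((x_i,y_i))_{i\in I}$ in $\widetilde X$, its Lipschitz interpolating operator is $T:\mathrm{Lip}_0(X)\to\ell_\infty(I)$, $T(f)=\big((f(x_i)-f(y_i))/d(x_i,y_i)\big)_{i\in I}$; the family is Lipschitz interpolating for $\mathrm{Lip}_0(X)$ if $T$ is surjective, and then its Lipschitz interpolation constant is $M=\inf\{K\geq 1: \forall \alpha\in\ell_\infty(I), \|\alpha\|_\infty\le1,\ \exists f\in\mathrm{Lip}_0(X),\ \|f\|\le K,\ T(f)=\alpha\}$. A Beurling set of functions in $\mathrm{Lip}_0(X)$ for such a family (with constant $M$) is a family $(f_i)_{i\in I}$ of functions $f_i:X\to\mathbb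 R$ with $f_i(0)=0$ for all $i$, $(f_i(x_j)-f_i(y_j))/d(x_j,y_j)=\delta_{ij}$ (Kronecker delta) for all $i,j\in I$, and $\sup_{(x,y)\in\widetilde X}\sum_{i\in I}|f_i(x)-f_i(y)|/d(x,y)\leq M$. *)

theory Defs
  imports "HOL-Analysis.Analysis"
begin

definition lip_quotients :: "('a::metric_space \<Rightarrow> real) \<Rightarrow> real set" where
  "lip_quotients f = {\<bar>f p - f q\<bar> / dist p q | p q. p \<noteq> q}"

definition lip_norm :: "('a::metric_space \<Rightarrow> real) \<Rightarrow> real" where
  "lip_norm f = Sup (insert 0 (lip_quotients f))"

definition Lip0 :: "'a::metric_space \<Rightarrow> ('a \<Rightarrow> real) set" where
  "Lip0 z0 = {f. f z0 = 0 \<and> bdd_above (lip_quotients f)}"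

definition linf :: "'i set \<Rightarrow> ('i \<Rightarrow> real) set" where
  "linf I = {\<alpha>. (\<forall>i. i \<notin> I \<longrightarrow> \<alpha> i = 0) \<and> bdd_above ((\<lambda>i. \<bar>\<alpha> i\<bar>) ` I)}"

definition linf_norm :: "'i set \<Rightarrow> ('i \<Rightarrow> real) \<Rightarrow> real" where
  "linf_norm I \<alpha> = Sup (insert 0 ((\<lambda>i. \<bar>\<alpha> i\<bar>) ` I))"

definition lip_interp_op ::
  "'i set \<Rightarrow> ('i \<Rightarrow> 'a::metric_space) \<Rightarrow> ('i \<Rightarrow> 'a) \<Rightarrow> ('a \<Rightarrow> real) \<Rightarrow> 'i \<Rightarrow> real" where
  "lip_interp_op I x y f = (\<lambda>i. if i \<in> I then (f (x i) - f (y i)) / dist (x i) (y i) else 0)"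

definition lip_interpolating ::
  "'a::metric_space \<Rightarrow> 'i set \<Rightarrow> ('i \<Rightarrow> 'a) \<Rightarrow> ('i \<Rightarrow> 'a) \<Rightarrow> bool" where
  "lip_interpolating z0 I x y \<longleftrightarrow>
     (\<forall>i\<in>I. x i \<noteq> y i) \<and>
     (\<forall>\<alpha>\<in>linf I. \<exists>f\<in>Lip0 z0. lip_interp_op I x y f = \<alpha>)"

definition lip_interp_const ::
  "'a::metric_space \<Rightarrow> 'i set \<Rightarrow> ('i \<Rightarrow> 'a) \<Rightarrow> ('i \<Rightarrow> 'a) \<Rightarrow> real" where
  "lip_interp_const z0 I x y =
     Inf {K. K \<ge> 1 \<and> (\<forall>\<alpha>\<in>linf I. linf_norm I \<alpha> \<le> 1 \<longrightarrow>
              (\<exists>f\<in>Lip0 z0. lip_norm f \<le> K \<and> lip_interp_op I x y f = \<alpha>))}"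

definition beurling_set ::
  "'a::metric_space \<Rightarrow> 'i set \<Rightarrow> ('i \<Rightarrow> 'a) \<Rightarrow> ('i \<Rightarrow> 'a) \<Rightarrow> real \<Rightarrow> ('i \<Rightarrow> 'a \<Rightarrow> real) \<Rightarrow> bool" where
  "beurling_set z0 I x y M fs \<longleftrightarrow>
     (\<forall>i\<in>I. fs i z0 = 0) \<and>
     (\<forall>i\<in>I. \<forall>j\<in>I. (fs i (x j) - fs i (y j)) / dist (x j) (y j) = (if i = j then 1 else 0)) \<and>
     (\<forall>p q. p \<noteq> q \<longrightarrow>
        (\<lambda>i. \<bar>fs i p - fs i q\<bar> / dist p q) summable_on I \<and>
        (\<Sum>\<^sub>\<infinity>i\<in>I. \<bar>fs i p - fs i q\<bar> / dist p q) \<le> M)"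

end

theory Submission
  imports Defs
begin

lemma lip_norm_ge0: "f \<in> Lip0 z0 \<Longrightarrow> 0 \<le> lip_norm f"
  unfolding lip_norm_def Lip0_def
  by (rule cSup_upper) auto

lemma lip_quot_le: "f \<in> Lip0 z0 \<Longrightarrow> p \<noteq> q \<Longrightarrow> \<bar>f p - f q\<bar> / dist p q \<le> lip_norm f"
  unfolding lip_norm_def Lip0_def
  by (rule cSup_upper) (auto simp: lip_quotients_def)

lemma linf_fin:
  assumes "finite F" "F \<subseteq> I" "\<And>i. \<bar>s i\<bar> \<le> 1"
  shows "(\<lambda>j. if j \<in> F then s j else 0) \<in> linf I"
    and "linf_norm I (\<lambda>j. if j \<in> F then s j else 0) \<le> 1"
proof -
  show "(\<lambda>j. if j \<in> F then s j else 0) \<in> linf I"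
    unfolding linf_def using assms
    by (auto intro!: bdd_aboveI[where M=1])
  show "linf_norm I (\<lambda>j. if j \<in> F then s j else 0) \<le> 1"
    unfolding linf_norm_def using assms
    by (intro cSup_least) auto
qed

theorem theorem3p10:
  fixes z0 :: "'a::metric_space"
    and I :: "'i set"
    and x y :: "'i \<Rightarrow> 'a"
    and M :: real
    and R :: "('i \<Rightarrow> real) \<Rightarrow> ('a \<Rightarrow> real)"
  assumes interp: "lip_interpolating z0 I x y"
    and M_def: "M = lip_interp_const z0 I x y"
    and R_maps: "\<And>\<alpha>. \<alpha> \<in> linf I \<Longrightarrow> R \<alpha> \<in> Lip0 z0"
    and R_linear: "\<And>\<alpha> \<beta> a b. \<alpha> \<in> linf I \<Longrightarrow> \<beta> \<in> linf I \<Longrightarrow>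
                     R (\<lambda>i. a * \<alpha> i + b * \<beta> i) = (\<lambda>p. a * R \<alpha> p + b * R \<beta> p)"
    and R_norm: "\<And>\<alpha>. \<alpha> \<in> linf I \<Longrightarrow> lip_norm (R \<alpha>) \<le> M * linf_norm I \<alpha>"
    and TR_id: "\<And>\<alpha>. \<alpha> \<in> linf I \<Longrightarrow> lip_interp_op I x y (R \<alpha>) = \<alpha>"
  shows "\<exists>fs. beurling_set z0 I x y M fs"
proof -
  define e where "e i = (\<lambda>j::'i. if j \<in> {i} then (1::real) else 0)" for i
  define fs where "fs i = R (e i)" for i
  have e_linf: "e i \<in> linf I" if "i \<in> I" for i
    unfolding e_def using linf_fin(1)[of "{i}" I "\<lambda>_. 1"] that by auto
  have z0: "(\<lambda>j::'i. 0::real) \<in> linf I" unfolding linf_def by auto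
  have R0: "R (\<lambda>j. 0) = (\<lambda>p. 0)"
    using R_linear[OF z0 z0, of 0 0] by simp
  have M0: "M \<ge> 0"
  proof (cases "I = {}")
    case True
    have lz: "lip_norm (\<lambda>p::'a. 0::real) = 0"
    proof -
      have "insert 0 (lip_quotients (\<lambda>p::'a. 0::real)) \<subseteq> {0}"
        by (auto simp: lip_quotients_def)
      moreover have "0 \<in> insert 0 (lip_quotients (\<lambda>p::'a. 0::real))" by simp
      ultimately have eq0: "insert 0 (lip_quotients (\<lambda>p::'a. 0::real)) = {0}" by blast
      show ?thesis unfolding lip_norm_def eq0 by simp
    qed
    have lc: "linf I = {\<lambda>j. 0}" using True unfolding linf_def by auto
    have "(\<lambda>p::'a. 0::real) \<in> Lip0 z0"
      unfolding Lip0_def lip_quotients_def by auto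
    moreover have "lip_interp_op I x y (\<lambda>p::'a. 0::real) = (\<lambda>j. 0)"
      unfolding lip_interp_op_def by auto
    ultimately have mem: "1 \<in> {K. K \<ge> 1 \<and> (\<forall>\<alpha>\<in>linf I. linf_norm I \<alpha> \<le> 1 \<longrightarrow>
              (\<exists>f\<in>Lip0 z0. lip_norm f \<le> K \<and> lip_interp_op I x y f = \<alpha>))}"
      using lc lz by (auto intro!: bexI[where x="\<lambda>p. 0"])
    have "1 \<le> M" unfolding M_def lip_interp_const_def
      by (rule cInf_greatest) (use mem in auto)
    thus ?thesis by simp
  next
    case False
    then obtain i where i: "i \<in> I" by auto
    have "linf_norm I (e i) \<le> 1" unfolding e_def using linf_fin(2)[of "{i}" I "\<lambda>_. 1"] i by auto
    have "0 \<le> lip_norm (R (e i))" using lip_norm_ge0 R_maps e_linf i by blast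
    also have "\<dots> \<le> M * linf_norm I (e i)" using R_norm e_linf i by blast
    finally have a: "0 \<le> M * linf_norm I (e i)" .
    have "linf_norm I (e i) \<ge> 1" unfolding linf_norm_def e_def
      by (rule cSup_upper2[of 1 _ 1]) (use i linf_fin(1)[of "{i}" I "\<lambda>_. 1"] in \<open>auto simp: linf_def\<close>)
    with a show ?thesis by (simp add: zero_le_mult_iff)
  qed
  have Rsum: "R (\<lambda>j. if j \<in> F then s j else 0) = (\<lambda>p. \<Sum>i\<in>F. s i * fs i p)"
    if "finite F" "F \<subseteq> I" "\<And>i. \<bar>s i\<bar> \<le> 1" for F s
    using that
  proof (induction F rule: finite_induct)
    case empty
    then show ?case using R0 by simp
  next
    case (insert k F)
    have A: "(\<lambda>j. if j \<in> F then s j else 0) \<in> linf I"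
      using linf_fin(1)[of F I s] insert by auto
    have B: "e k \<in> linf I" using e_linf insert by auto
    have "(\<lambda>j. if j \<in> insert k F then s j else 0) =
          (\<lambda>j. 1 * (if j \<in> F then s j else 0) + s k * e k j)"
      using insert by (auto simp: e_def)
    then have "R (\<lambda>j. if j \<in> insert k F then s j else 0) =
          (\<lambda>p. 1 * R (\<lambda>j. if j \<in> F then s j else 0) p + s k * R (e k) p)"
      using R_linear[OF A B, of 1 "s k"] by (simp only: mult_1)
    then show ?case using insert by (simp add: fs_def add.commute)
  qed
  have bound: "(\<Sum>i\<in>F. \<bar>fs i p - fs i q\<bar> / dist p q) \<le> M"
    if "finite F" "F \<subseteq> I" "p \<noteq> q" for F p q
  proof -
    define s where "s i = sgn (fs i p - fs i q)" for i
    have s1: "\<bar>s i\<bar> \<le> 1" for i by (simp add: s_def abs_sgn_eq)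
    define g where "g = R (\<lambda>j. if j \<in> F then s j else 0)"
    have gl: "(\<lambda>j. if j \<in> F then s j else 0) \<in> linf I" using linf_fin(1) that s1 by blast
    have gn: "linf_norm I (\<lambda>j. if j \<in> F then s j else 0) \<le> 1" using linf_fin(2) that s1 by blast
    have "g p - g q = (\<Sum>i\<in>F. s i * (fs i p - fs i q))"
      unfolding g_def Rsum[OF that(1,2) s1] by (simp add: sum_subtractf right_diff_distrib)
    also have "\<dots> = (\<Sum>i\<in>F. \<bar>fs i p - fs i q\<bar>)"
      by (rule sum.cong) (auto simp: s_def sgn_real_def)
    finally have eq: "(\<Sum>i\<in>F. \<bar>fs i p - fs i q\<bar> / dist p q) = (g p - g q) / dist p q"
      by (simp add: sum_divide_distrib)
    have "(g p - g q) / dist p q \<le> \<bar>g p - g q\<bar> / dist p q"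
      by (simp add: divide_right_mono)
    also have "\<dots> \<le> lip_norm g" using lip_quot_le R_maps gl that(3) g_def by blast
    also have "\<dots> \<le> M * linf_norm I (\<lambda>j. if j \<in> F then s j else 0)" using R_norm gl g_def by blast
    also have "\<dots> \<le> M" using gn M0 by (simp add: mult_left_le)
    finally show ?thesis using eq by simp
  qed
  have "beurling_set z0 I x y M fs"
    unfolding beurling_set_def
  proof (intro conjI ballI allI impI)
    fix i assume "i \<in> I"
    then show "fs i z0 = 0" using R_maps e_linf unfolding fs_def Lip0_def by blast
  next
    fix i j assume i: "i \<in> I" and j: "j \<in> I"
    have "lip_interp_op I x y (fs i) j = e i j" unfolding fs_def using TR_id e_linf i by simp
    then show "(fs i (x j) - fs i (y j)) / dist (x j) (y j) = (if i = j then 1 else 0)"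
      using j unfolding lip_interp_op_def e_def by auto
  next
    fix p q :: 'a assume pq: "p \<noteq> q"
    show sm: "(\<lambda>i. \<bar>fs i p - fs i q\<bar> / dist p q) summable_on I"
      by (rule nonneg_bdd_above_summable_on) (auto intro!: bdd_aboveI[where M=M] bound pq)
    show "(\<Sum>\<^sub>\<infinity>i\<in>I. \<bar>fs i p - fs i q\<bar> / dist p q) \<le> M"
      by (rule infsum_le_finite_sums[OF sm]) (use bound pq in blast)
  qed
  then show ?thesis by blast
qed

end
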